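(* Let $\mathcal{H}$ be a complex Hilbert space, let $A\in\mathcal{B}(\mathcal{H})$ be a nonzero positive operator, and let $\mathbb{A}=\begin{pmatrix}A&O\\O&A\end{pmatrix}$ on $\mathcal{H}\oplus\mathcal{H}$. Let $P,Q,R,S\in\mathcal{B}_A(\mathcal{H})$. Then $$\omega_{\mathbb{A}}\left[\begin{pmatrix}P&Q\\R&S\end{pmatrix}\right]\geq\frac12\max\{\mu,\nu\},$$ where $\mu=\max\{\omega_A(Q+R+S+P),\ \omega_A(Q+R-S-P)\}$ and $\nu=\max\{\omega_A(Q-R+i(S+P)),\ \omega_A(Q-R-i(S+P))\}$.
   Context: For a positive operator $A$ on $\mathcal{H}$, $\langle x,y\rangle_A:=\langle Ax,y\rangle$ and $\|x\|_A:=\sqrt{\langle x,x\rangle_A}$. $\mathcal{B}_A(\mathcal{H})$ is the set of $T\in\mathcal{B}(\mathcal{H})$ with $\mathcal{R}(T^*A)\subseteq\mathcal{R}(A)$. $\omega_A(T):=\sup\{|\langle Tx,x\rangle_A|:x\in\mathcal{H},\|x\|_A=1\}$. $\omega_{\mathbb{A}}$ is defined analogously on $\mathcal{H}\oplus\mathcal{H}$ with $\langle (x_1,x_2),(y_1,y_2)\rangle_{\mathbb{A}}=\langle x_1,y_1\rangle_A+\langle x_2,y_2\rangle_A$. *)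

theory Defs
  imports "HOL-Analysis.Analysis"
begin

class complex_vector = real_vector +
  fixes scaleC :: "complex \<Rightarrow> 'a \<Rightarrow> 'a" (infixr \<open>*\<^sub>C\<close> 75)
  assumes scaleC_add_right: "a *\<^sub>C (x + y) = a *\<^sub>C x + a *\<^sub>C y"
    and scaleC_add_left: "(a + b) *\<^sub>C x = a *\<^sub>C x + b *\<^sub>C x"
    and scaleC_scaleC: "a *\<^sub>C (b *\<^sub>C x) = (a * b) *\<^sub>C x"
    and scaleC_one: "1 *\<^sub>C x = x"
    and scaleR_scaleC: "scaleR r x = complex_of_real r *\<^sub>C x"

class complex_inner = complex_vector + real_normed_vector +
  fixes cinner :: "'a \<Rightarrow> 'a \<Rightarrow> complex"
  assumes cinner_commute: "cinner x y = cnj (cinner y x)"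
    and cinner_add_left: "cinner (x + y) z = cinner x z + cinner y z"
    and cinner_scaleC_left: "cinner (a *\<^sub>C x) y = a * cinner x y"
    and cinner_self_nonneg: "0 \<le> Re (cinner x x)"
    and cinner_self_eq_zero: "cinner x x = 0 \<longleftrightarrow> x = 0"
    and norm_eq_sqrt_cinner: "norm x = sqrt (Re (cinner x x))"

class chilbert_space = complex_inner + complete_space

definition bounded_clinear :: "('a::complex_inner \<Rightarrow> 'a) \<Rightarrow> bool" where
  "bounded_clinear T \<longleftrightarrow>
     (\<forall>x y. T (x + y) = T x + T y) \<and> (\<forall>c x. T (c *\<^sub>C x) = c *\<^sub>C T x) \<and>
     (\<exists>K. \<forall>x. norm (T x) \<le> norm x * K)"

definition is_adjoint :: "('a::complex_inner \<Rightarrow> 'a) \<Rightarrow> ('a \<Rightarrow> 'a) \<Rightarrow> bool" where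
  "is_adjoint T S \<longleftrightarrow> (\<forall>x y. cinner (T x) y = cinner x (S y))"

text \<open>The adjoint \<open>T\<^sup>*\<close> (exists and is unique for bounded operators on a Hilbert space).\<close>
definition adjoint :: "('a::complex_inner \<Rightarrow> 'a) \<Rightarrow> ('a \<Rightarrow> 'a)" where
  "adjoint T = (SOME S. is_adjoint T S)"

definition positive_op :: "('a::complex_inner \<Rightarrow> 'a) \<Rightarrow> bool" where
  "positive_op A \<longleftrightarrow> bounded_clinear A \<and>
     (\<forall>x. Im (cinner (A x) x) = 0 \<and> 0 \<le> Re (cinner (A x) x))"

definition A_inner :: "('a::complex_inner \<Rightarrow> 'a) \<Rightarrow> 'a \<Rightarrow> 'a \<Rightarrow> complex" where
  "A_inner A x y = cinner (A x) y"

definition A_norm :: "('a::complex_inner \<Rightarrow> 'a) \<Rightarrow> 'a \<Rightarrow> real" where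
  "A_norm A x = sqrt (Re (A_inner A x x))"

definition BA :: "('a::complex_inner \<Rightarrow> 'a) \<Rightarrow> ('a \<Rightarrow> 'a) set" where
  "BA A = {T. bounded_clinear T \<and> range (adjoint T \<circ> A) \<subseteq> range A}"

definition omega_A :: "('a::complex_inner \<Rightarrow> 'a) \<Rightarrow> ('a \<Rightarrow> 'a) \<Rightarrow> real" where
  "omega_A A T = Sup {cmod (A_inner A (T x) x) | x. A_norm A x = 1}"

text \<open>The semi-inner product induced by \<open>\<AA> = diag(A,A)\<close> on \<open>H \<oplus> H\<close> (modelled as \<open>'a \<times> 'a\<close>).\<close>
definition AA_inner :: "('a::complex_inner \<Rightarrow> 'a) \<Rightarrow> 'a \<times> 'a \<Rightarrow> 'a \<times> 'a \<Rightarrow> complex" where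
  "AA_inner A x y = A_inner A (fst x) (fst y) + A_inner A (snd x) (snd y)"

definition AA_norm :: "('a::complex_inner \<Rightarrow> 'a) \<Rightarrow> 'a \<times> 'a \<Rightarrow> real" where
  "AA_norm A x = sqrt (Re (AA_inner A x x))"

definition omega_AA :: "('a::complex_inner \<Rightarrow> 'a) \<Rightarrow> ('a \<times> 'a \<Rightarrow> 'a \<times> 'a) \<Rightarrow> real" where
  "omega_AA A T = Sup {cmod (AA_inner A (T z) z) | z. AA_norm A z = 1}"

definition block_op :: "('a::complex_inner \<Rightarrow> 'a) \<Rightarrow> ('a \<Rightarrow> 'a) \<Rightarrow> ('a \<Rightarrow> 'a) \<Rightarrow> ('a \<Rightarrow> 'a)
    \<Rightarrow> 'a \<times> 'a \<Rightarrow> 'a \<times> 'a" where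
  "block_op P Q R S z = (P (fst z) + Q (snd z), R (fst z) + S (snd z))"

end

theory Submission
  imports Defs
begin

lemma scaleC_zero_left[simp]: "0 *\<^sub>C x = (0::'a::complex_vector)"
  using scaleR_scaleC[of 0 x] by simp

lemma scaleC_zero_right[simp]: "a *\<^sub>C (0::'a::complex_vector) = 0"
proof -
  have "a *\<^sub>C (0::'a) = a *\<^sub>C 0 + a *\<^sub>C 0" using scaleC_add_right[of a "0::'a" 0] by simp
  thus ?thesis by simp
qed

lemma scaleC_minus_left: "(- a) *\<^sub>C x = - (a *\<^sub>C (x::'a::complex_vector))"
proof -
  have "a *\<^sub>C x + (-a) *\<^sub>C x = 0" using scaleC_add_left[of a "-a" x] by simp
  from minus_unique[OF this] show ?thesis by simp
qed

lemma scaleC_minus_right: "a *\<^sub>C (- x) = - (a *\<^sub>C (x::'a::complex_vector))"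
proof -
  have "a *\<^sub>C x + a *\<^sub>C (-x) = 0" using scaleC_add_right[of a x "-x"] by simp
  from minus_unique[OF this] show ?thesis by simp
qed

lemma scaleC_diff_right: "a *\<^sub>C (x - y) = a *\<^sub>C x - a *\<^sub>C (y::'a::complex_vector)"
  using scaleC_add_right[of a x "-y"] by (simp add: scaleC_minus_right)

lemma scaleC_diff_left: "(a - b) *\<^sub>C x = a *\<^sub>C x - b *\<^sub>C (x::'a::complex_vector)"
  using scaleC_add_left[of a "-b" x] by (simp add: scaleC_minus_left)

lemma scaleC_of_real: "complex_of_real r *\<^sub>C x = r *\<^sub>R (x::'a::complex_vector)"
  by (simp add: scaleR_scaleC)

lemma cinner_zero_left[simp]: "cinner 0 y = 0"
proof -
  have "cinner (0::'a) y = cinner 0 y + cinner 0 y" using cinner_add_left[of "0::'a" 0 y] by simp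
  thus ?thesis by simp
qed

lemma cinner_minus_left: "cinner (- x) y = - cinner x y"
proof -
  have "cinner x y + cinner (-x) y = 0" using cinner_add_left[of x "-x" y] by simp
  from minus_unique[OF this] show ?thesis by simp
qed

lemma cinner_diff_left: "cinner (x - y) z = cinner x z - cinner y z"
  using cinner_add_left[of x "-y" z] by (simp add: cinner_minus_left)

lemma cinner_add_right: "cinner x (y + z) = cinner x y + cinner x z"
  by (subst (1 2 3) cinner_commute) (simp add: cinner_add_left)

lemma cinner_zero_right[simp]: "cinner x 0 = 0"
  by (subst cinner_commute) simp

lemma cinner_minus_right: "cinner x (- y) = - cinner x y"
  by (subst (1 2) cinner_commute) (simp add: cinner_minus_left)

lemma cinner_diff_right: "cinner x (y - z) = cinner x y - cinner x z"
  using cinner_add_right[of x y "-z"] by (simp add: cinner_minus_right)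

lemma cinner_scaleC_right: "cinner x (a *\<^sub>C y) = cnj a * cinner x y"
  by (subst (1 2) cinner_commute) (simp add: cinner_scaleC_left)

lemma cinner_scaleR_left: "cinner (r *\<^sub>R x) y = complex_of_real r * cinner x y"
  by (simp add: scaleR_scaleC cinner_scaleC_left)

lemma cinner_scaleR_right: "cinner x (r *\<^sub>R y) = complex_of_real r * cinner x y"
  by (simp add: scaleR_scaleC cinner_scaleC_right)

lemma cinner_self_Im: "Im (cinner x x) = 0"
proof -
  have h: "cinner x x = cnj (cinner x x)" by (rule cinner_commute)
  from arg_cong[OF h, of Im] show ?thesis by simp
qed

lemma cinner_self_real: "cinner x x = complex_of_real ((norm x)^2)"
proof -
  have "(norm x)^2 = Re (cinner x x)" using norm_eq_sqrt_cinner[of x] cinner_self_nonneg[of x] by simp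
  then show ?thesis using cinner_self_Im[of x] by (simp add: complex_eq_iff)
qed

lemma norm_scaleC: "norm (a *\<^sub>C (x::'a::complex_inner)) = cmod a * norm x"
proof -
  have "cinner (a *\<^sub>C x) (a *\<^sub>C x) = complex_of_real ((cmod a)^2) * cinner x x"
  proof -
    have "a * cnj a = complex_of_real ((cmod a)^2)" using complex_norm_square[of a] by simp
    thus ?thesis by (simp add: cinner_scaleC_left cinner_scaleC_right mult.assoc[symmetric] mult.commute[of "cnj a"])
  qed
  hence "(norm (a *\<^sub>C x))^2 = (cmod a)^2 * (norm x)^2"
    by (metis cinner_self_real of_real_eq_iff of_real_mult)
  hence "sqrt ((norm (a *\<^sub>C x))^2) = sqrt ((cmod a)^2 * (norm x)^2)" by simp
  thus ?thesis by (simp add: real_sqrt_mult)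
qed


lemma bcl_add: "bounded_clinear T \<Longrightarrow> T (x + y) = T x + T y"
  unfolding bounded_clinear_def by blast

lemma bcl_scaleC: "bounded_clinear T \<Longrightarrow> T (c *\<^sub>C x) = c *\<^sub>C T x"
  unfolding bounded_clinear_def by blast

lemma bcl_zero: "bounded_clinear T \<Longrightarrow> T 0 = 0"
  using bcl_scaleC[of T 0 0] by simp

lemma bcl_minus: "bounded_clinear T \<Longrightarrow> T (- x) = - T x"
  using bcl_scaleC[of T "-1" x] by (simp add: scaleC_minus_left scaleC_one)

lemma bcl_diff: "bounded_clinear T \<Longrightarrow> T (x - y) = T x - T y"
  using bcl_add[of T x "-y"] bcl_minus[of T y] by simp

lemma bcl_scaleR: "bounded_clinear T \<Longrightarrow> T (r *\<^sub>R x) = r *\<^sub>R T x"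
  by (simp add: scaleR_scaleC bcl_scaleC)

lemma bcl_bound: assumes "bounded_clinear T" obtains K where "K > 0" "\<And>x. norm (T x) \<le> norm x * K"
proof -
  obtain K where K: "\<And>x. norm (T x) \<le> norm x * K" using assms unfolding bounded_clinear_def by blast
  have "norm (T x) \<le> norm x * max K 1" for x
    by (rule order_trans[OF K]) (simp add: mult_left_mono)
  thus ?thesis using that[of "max K 1"] by simp
qed

lemma bcl_bounded_linear: assumes "bounded_clinear T" shows "bounded_linear T"
proof -
  obtain K where "\<And>x. norm (T x) \<le> norm x * K" using assms unfolding bounded_clinear_def by blast
  thus ?thesis
    by (intro bounded_linear_intro[of _ K]) (simp_all add: bcl_add[OF assms] bcl_scaleR[OF assms])
qed

lemma bcl_id: "bounded_clinear (\<lambda>x::'a::complex_inner. x)"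
  unfolding bounded_clinear_def by (auto intro: exI[of _ 1])

lemma pos_bcl: "positive_op A \<Longrightarrow> bounded_clinear A"
  unfolding positive_op_def by blast

lemma pos_Im: "positive_op A \<Longrightarrow> Im (cinner (A x) x) = 0"
  unfolding positive_op_def by blast

lemma pos_Re: "positive_op A \<Longrightarrow> 0 \<le> Re (cinner (A x) x)"
  unfolding positive_op_def by blast

lemma pos_herm:
  assumes A: "positive_op A"
  shows "cinner (A x) y = cinner x (A y)"
proof -
  have L: "bounded_clinear A" using A by (rule pos_bcl)
  define a where "a = cinner (A x) y"
  define b where "b = cinner (A y) x"
  have e1: "cinner (A (x + y)) (x + y) = cinner (A x) x + a + b + cinner (A y) y"
    by (simp add: a_def b_def bcl_add[OF L] cinner_add_left cinner_add_right)
  have e2: "cinner (A (x + \<i> *\<^sub>C y)) (x + \<i> *\<^sub>C y) = cinner (A x) x - \<i> * a + \<i> * b + cinner (A y) y"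
    by (simp add: a_def b_def bcl_add[OF L] bcl_scaleC[OF L] cinner_add_left cinner_add_right
        cinner_scaleC_left cinner_scaleC_right algebra_simps)
  have "Im (a + b) = 0" using e1 pos_Im[OF A, of "x+y"] pos_Im[OF A, of x] pos_Im[OF A, of y] by simp
  moreover have "Re b - Re a = 0" using e2 pos_Im[OF A, of "x+ \<i> *\<^sub>C y"] pos_Im[OF A, of x] pos_Im[OF A, of y] by simp
  ultimately have "a = cnj b" by (simp add: complex_eq_iff)
  thus ?thesis by (simp add: a_def b_def cinner_commute[of x])
qed

lemma pos_id: "positive_op (\<lambda>x::'a::complex_inner. x)"
  unfolding positive_op_def using bcl_id cinner_self_Im cinner_self_nonneg by blast

lemma cs_aux:
  fixes a c :: real and b :: complex
  assumes "\<And>s::real. 0 \<le> a - 2 * s * (cmod b)^2 + s^2 * (cmod b)^2 * c" and "c \<ge> 0" and "a \<ge> 0"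
  shows "cmod b \<le> sqrt a * sqrt c"
proof (cases "c = 0")
  case True
  show ?thesis
  proof (rule ccontr)
    assume "\<not> ?thesis"
    hence "b \<noteq> 0" using True by auto
    hence p: "(cmod b)^2 > 0" by simp
    have "0 \<le> a - 2*((a+1)/(2*(cmod b)^2))*(cmod b)^2" using assms(1)[of "(a+1)/(2*(cmod b)^2)"] True by simp
    also have "\<dots> = -1" using p by (simp add: field_simps)
    finally show False by simp
  qed
next
  case False
  hence c: "c > 0" using assms(2) by simp
  have "0 \<le> a - 2*(1/c)*(cmod b)^2 + (1/c)^2*(cmod b)^2*c" using assms(1) by blast
  also have "\<dots> = a - (cmod b)^2 / c" using c by (simp add: field_simps power2_eq_square)
  finally have "(cmod b)^2 \<le> a * c" using c by (simp add: field_simps)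
  hence "sqrt ((cmod b)^2) \<le> sqrt (a * c)" by (rule real_sqrt_le_mono)
  thus ?thesis by (simp add: real_sqrt_mult)
qed

lemma A_cs:
  assumes A: "positive_op A"
  shows "cmod (cinner (A x) y) \<le> sqrt (Re (cinner (A x) x)) * sqrt (Re (cinner (A y) y))"
proof (rule cs_aux)
  have L: "bounded_clinear A" using A by (rule pos_bcl)
  define b where "b = cinner (A x) y"
  have hb: "cinner (A y) x = cnj b" unfolding b_def by (simp add: pos_herm[OF A] cinner_commute[of x])
  fix s :: real
  define t where "t = complex_of_real s * b"
  have "cinner (A (x - t *\<^sub>C y)) (x - t *\<^sub>C y)
     = cinner (A x) x - cnj t * b - t * cnj b + t * cnj t * cinner (A y) y"
    by (simp add: b_def hb bcl_diff[OF L] bcl_scaleC[OF L] cinner_diff_left cinner_diff_right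
        cinner_scaleC_left cinner_scaleC_right algebra_simps)
  also have "\<dots> = cinner (A x) x - complex_of_real (2 * s * (cmod b)^2) + complex_of_real (s^2 * (cmod b)^2) * cinner (A y) y"
  proof -
    have nb: "b * cnj b = complex_of_real ((cmod b)^2)" using complex_norm_square[of b] by simp
    have nb': "cnj b * b = complex_of_real ((cmod b)^2)" using nb by (simp add: mult.commute)
    have 1: "cnj t * b = complex_of_real (s * (cmod b)^2)" unfolding t_def
      by (simp add: mult.assoc nb')
    have 2: "t * cnj b = complex_of_real (s * (cmod b)^2)" unfolding t_def
      by (simp add: mult.assoc nb)
    have 3: "t * cnj t = complex_of_real (s^2 * (cmod b)^2)" unfolding t_def
      by (simp add: mult.assoc mult.left_commute[of b] nb power2_eq_square)
    show ?thesis unfolding 1 2 3 by simp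
  qed
  finally have "Re (cinner (A (x - t *\<^sub>C y)) (x - t *\<^sub>C y))
     = Re (cinner (A x) x) - 2 * s * (cmod b)^2 + s^2 * (cmod b)^2 * Re (cinner (A y) y)" by simp
  with pos_Re[OF A, of "x - t *\<^sub>C y"]
  show "0 \<le> Re (cinner (A x) x) - 2 * s * (cmod (cinner (A x) y))^2 + s^2 * (cmod (cinner (A x) y))^2 * Re (cinner (A y) y)"
    by (simp add: b_def)
qed (use pos_Re[OF A] in auto)

lemma cinner_cs: "cmod (cinner x y) \<le> norm x * norm (y::'a::complex_inner)"
  using A_cs[OF pos_id, of x y] by (simp add: norm_eq_sqrt_cinner)


lemma cinner_left_bl: "bounded_linear (\<lambda>x. cinner x (c::'a::complex_inner))"
  by (rule bounded_linear_intro[of _ "norm c"])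
     (simp_all add: cinner_add_left cinner_scaleR_left scaleR_conv_of_real cinner_cs)

lemma cinner_right_bl: "bounded_linear (\<lambda>y. cinner (c::'a::complex_inner) y)"
proof (rule bounded_linear_intro[of _ "norm c"])
  fix x show "norm (cinner c x) \<le> norm x * norm c" using cinner_cs[of c x] by (simp add: mult.commute)
qed (simp_all add: cinner_add_right cinner_scaleR_right scaleR_conv_of_real)

lemma norm_add_sq: "(norm (u + v))^2 = (norm u)^2 + 2 * Re (cinner u v) + (norm (v::'a::complex_inner))^2"
proof -
  have "cinner (u+v) (u+v) = cinner u u + cinner u v + cnj (cinner u v) + cinner v v"
    by (simp add: cinner_add_left cinner_add_right cinner_commute[of v u])
  hence "Re (cinner (u+v) (u+v)) = Re (cinner u u) + 2 * Re (cinner u v) + Re (cinner v v)" by simp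
  thus ?thesis by (simp add: cinner_self_real)
qed

lemma norm_diff_sq: "(norm (u - v))^2 = (norm u)^2 - 2 * Re (cinner u v) + (norm (v::'a::complex_inner))^2"
  using norm_add_sq[of u "-v"] by (simp add: cinner_minus_right)

lemma expand_id:
  fixes x y :: "'a::complex_inner"
  shows "(norm (x - (complex_of_real s * cinner x y) *\<^sub>C y))^2
     = (norm x)^2 - 2 * s * (cmod (cinner x y))^2 + s^2 * (cmod (cinner x y))^2 * (norm y)^2"
proof -
  define b where "b = cinner x y"
  define t where "t = complex_of_real s * b"
  have nb: "b * cnj b = complex_of_real ((cmod b)^2)" using complex_norm_square[of b] by simp
  have nb': "cnj b * b = complex_of_real ((cmod b)^2)" using nb by (simp add: mult.commute)
  have "cinner x (t *\<^sub>C y) = complex_of_real s * (cnj b * b)"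
    by (simp add: t_def cinner_scaleC_right b_def[symmetric] mult.assoc)
  hence "Re (cinner x (t *\<^sub>C y)) = s * (cmod b)^2" unfolding nb' by simp
  moreover have "(norm (t *\<^sub>C y))^2 = s^2 * (cmod b)^2 * (norm y)^2"
    by (simp add: norm_scaleC t_def power_mult_distrib norm_mult)
  ultimately show ?thesis unfolding t_def[symmetric] b_def[symmetric] norm_diff_sq by simp
qed

lemma orth_of_min:
  fixes w m :: "'a::complex_inner"
  assumes "\<And>t. norm w \<le> norm (w - t *\<^sub>C m)"
  shows "cinner w m = 0"
proof -
  define c where "c = cmod (cinner w m)"
  define s where "s = 1 / ((norm m)^2 + 1)"
  have h: "0 < (norm m)^2 + 1" by (smt (verit) zero_le_power2)
  have s: "s > 0" "s * (norm m)^2 \<le> 1" unfolding s_def using h by (auto simp: field_simps)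
  have "(norm w)^2 \<le> (norm (w - (complex_of_real s * cinner w m) *\<^sub>C m))^2"
    using assms by (simp add: power_mono)
  hence "0 \<le> - 2 * s * c^2 + s^2 * c^2 * (norm m)^2" unfolding expand_id c_def by simp
  also have "s^2 * c^2 * (norm m)^2 = (s * c^2) * (s * (norm m)^2)" by (simp add: power2_eq_square)
  also have "\<dots> \<le> s * c^2" using s by (intro mult_left_le) auto
  finally have "s * c^2 \<le> 0" by simp
  hence "c^2 \<le> 0" using s by (simp add: mult_le_0_iff)
  hence "c = 0" by simp
  thus ?thesis by (simp add: c_def)
qed

section \<open>Projection theorem\<close>

lemma proj_exists:
  fixes M :: "'a::chilbert_space set"
  assumes cl: "closed M" and z0: "0 \<in> M" and add: "\<And>x y. x \<in> M \<Longrightarrow> y \<in> M \<Longrightarrow> x + y \<in> M"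
    and sc: "\<And>c x. x \<in> M \<Longrightarrow> c *\<^sub>C x \<in> M"
  shows "\<exists>p\<in>M. \<forall>m\<in>M. cinner (z - p) m = 0"
proof -
  define D where "D = (\<lambda>m. norm (z - m)) ` M"
  define d where "d = Inf D"
  have Dne: "D \<noteq> {}" using z0 by (auto simp: D_def)
  have bdd: "bdd_below D" unfolding D_def by (rule bdd_belowI[of _ 0]) auto
  have dle: "d \<le> norm (z - m)" if "m \<in> M" for m
    unfolding d_def using that bdd by (auto simp: D_def intro!: cInf_lower)
  have d0: "d \<ge> 0" using dle[OF z0] Dne bdd unfolding d_def
    by (intro cInf_greatest) (auto simp: D_def)
  have "\<exists>x. x \<in> M \<and> norm (z - x) < d + inverse (real (Suc n))" for n
  proof -
    have "Inf D < d + inverse (real (Suc n))" by (simp add: d_def)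
    from cInf_lessD[OF Dne this] show ?thesis by (auto simp: D_def)
  qed
  then obtain m where mM: "\<And>n. m n \<in> M" and mlt: "\<And>n. norm (z - m n) < d + inverse (real (Suc n))"
    by metis
  have mid: "(1/2) *\<^sub>R (x + y) \<in> M" if "x \<in> M" "y \<in> M" for x y
    using sc[OF add[OF that], of "complex_of_real (1/2)"] by (metis scaleC_of_real)
  have key: "(norm (m i - m j))^2 \<le> 4 * ((d + inverse (real (Suc N)))^2 - d^2)"
    if "i \<ge> N" "j \<ge> N" for i j N
  proof -
    define e where "e = inverse (real (Suc N))"
    have ei: "inverse (real (Suc i)) \<le> e" "inverse (real (Suc j)) \<le> e"
      using that by (auto simp: e_def field_simps)
    define u where "u = z - m i"
    define v where "v = z - m j"
    have nu: "norm u < d + e" using mlt[of i] ei by (simp add: u_def)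
    have nv: "norm v < d + e" using mlt[of j] ei by (simp add: v_def)
    have nu2: "(norm u)^2 \<le> (d + e)^2" using nu by (intro power_mono) auto
    have nv2: "(norm v)^2 \<le> (d + e)^2" using nv by (intro power_mono) auto
    have "u + v = 2 *\<^sub>R (z - (1/2) *\<^sub>R (m i + m j))"
      by (simp add: u_def v_def algebra_simps scaleR_2)
    hence "norm (u + v) = 2 * norm (z - (1/2) *\<^sub>R (m i + m j))" by simp
    also have "\<dots> \<ge> 2 * d" using dle[OF mid[OF mM mM]] by simp
    finally have "(2 * d)^2 \<le> (norm (u + v))^2" using d0 by (intro power_mono) auto
    moreover have "(norm (u - v))^2 + (norm (u + v))^2 = 2 * (norm u)^2 + 2 * (norm v)^2"
      by (simp add: norm_add_sq norm_diff_sq)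
    moreover have "u - v = m j - m i" by (simp add: u_def v_def)
    ultimately show ?thesis using nu2 nv2 by (simp add: e_def norm_minus_commute)
  qed
  have "Cauchy m"
  proof (rule CauchyI)
    fix e :: real assume e: "e > 0"
    have "e^2 / (4 * (2 * d + 1)) > 0" using e d0 by simp
    from reals_Archimedean[OF this] obtain N where N: "inverse (real (Suc N)) < e^2 / (4 * (2 * d + 1))"
      by blast
    show "\<exists>M. \<forall>i\<ge>M. \<forall>j\<ge>M. norm (m i - m j) < e"
    proof (intro exI allI impI)
      fix i j assume "i \<ge> N" "j \<ge> N"
      define ep where "ep = inverse (real (Suc N))"
      have ep: "0 < ep" "ep \<le> 1" by (auto simp: ep_def field_simps)
      have "(d + ep)^2 - d^2 = ep * (2 * d + ep)" by (simp add: power2_eq_square algebra_simps)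
      also have "\<dots> \<le> ep * (2 * d + 1)" using ep by (intro mult_left_mono) auto
      finally have "4 * ((d + ep)^2 - d^2) \<le> 4 * (ep * (2 * d + 1))" by simp
      also have "\<dots> < e^2" using N d0 by (simp add: ep_def field_simps)
      finally have "(norm (m i - m j))^2 < e^2"
        using key[OF \<open>i \<ge> N\<close> \<open>j \<ge> N\<close>] by (simp add: ep_def)
      thus "norm (m i - m j) < e" using e by (simp add: power_less_imp_less_base)
    qed
  qed
  then obtain p where lim: "m \<longlonglongrightarrow> p" using Cauchy_convergent_iff convergent_def by blast
  have pM: "p \<in> M" using cl lim mM unfolding closed_sequential_limits by blast
  have "(\<lambda>n. norm (z - m n)) \<longlonglongrightarrow> norm (z - p)" by (intro tendsto_intros lim)
  moreover have "(\<lambda>n. d + inverse (real (Suc n))) \<longlonglongrightarrow> d + 0"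
    by (intro tendsto_intros LIMSEQ_inverse_real_of_nat)
  ultimately have pd: "norm (z - p) \<le> d"
    using mlt by (intro LIMSEQ_le[of "\<lambda>n. norm (z - m n)" _ "\<lambda>n. d + inverse (real (Suc n))"])
       (auto intro: less_imp_le)
  have "cinner (z - p) m' = 0" if "m' \<in> M" for m'
  proof (rule orth_of_min)
    fix t
    have "p + t *\<^sub>C m' \<in> M" using add[OF pM sc[OF that]] .
    hence "d \<le> norm (z - (p + t *\<^sub>C m'))" by (rule dle)
    thus "norm (z - p) \<le> norm (z - p - t *\<^sub>C m')" using pd by (simp add: algebra_simps)
  qed
  thus ?thesis using pM by blast
qed


section \<open>Riesz representation and adjoints\<close>

lemma riesz:
  fixes f :: "'a::chilbert_space \<Rightarrow> complex"
  assumes add: "\<And>x y. f (x + y) = f x + f y" and sc: "\<And>c x. f (c *\<^sub>C x) = c * f x"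
    and bd: "\<And>x. cmod (f x) \<le> norm x * K"
  shows "\<exists>z. \<forall>x. f x = cinner x z"
proof (cases "\<forall>x. f x = 0")
  case True thus ?thesis by (intro exI[of _ 0]) simp
next
  case False
  then obtain x0 where x0: "f x0 \<noteq> 0" by blast
  have f0: "f 0 = 0" using sc[of 0 0] by simp
  have fdiff: "f (x - y) = f x - f y" for x y
    using add[of x "-y"] sc[of "-1" y] by (simp add: scaleC_minus_left scaleC_one)
  have bl: "bounded_linear f"
    by (rule bounded_linear_intro[of _ K]) (simp_all add: add bd scaleR_scaleC sc scaleR_conv_of_real)
  have cl: "closed {x. f x = 0}"
    by (rule closed_Collect_eq) (simp_all add: linear_continuous_on[OF bl])
  obtain p where pN: "f p = 0" and orth: "\<And>m. f m = 0 \<Longrightarrow> cinner (x0 - p) m = 0"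
    using proj_exists[OF cl, of x0] f0 add sc by auto
  define u where "u = x0 - p"
  have fu: "f u = f x0" by (simp add: u_def fdiff pN)
  hence "u \<noteq> 0" using x0 f0 by auto
  hence uu: "cinner u u \<noteq> 0" using cinner_self_eq_zero by blast
  define z where "z = cnj (f u / cinner u u) *\<^sub>C u"
  have "f x = cinner x z" for x
  proof -
    define w where "w = x - (f x / f u) *\<^sub>C u"
    have "f w = 0" using fu x0 by (simp add: w_def fdiff sc)
    hence "cinner u w = 0" using orth by (simp add: u_def)
    hence "cinner w u = 0" by (metis cinner_commute complex_cnj_zero)
    hence "cinner x u = (f x / f u) * cinner u u"
      by (simp add: w_def cinner_diff_left cinner_scaleC_left)
    thus ?thesis using uu fu x0 by (simp add: z_def cinner_scaleC_right)
  qed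
  thus ?thesis by blast
qed

lemma adjoint_works:
  fixes T :: "'a::chilbert_space \<Rightarrow> 'a"
  assumes T: "bounded_clinear T"
  shows "cinner (T x) y = cinner x (adjoint T y)"
proof -
  obtain K where K: "\<And>x. norm (T x) \<le> norm x * K" using bcl_bound[OF T] by metis
  have "\<forall>y. \<exists>z. \<forall>x. cinner (T x) y = cinner x z"
  proof
    fix y
    show "\<exists>z. \<forall>x. cinner (T x) y = cinner x z"
    proof (rule riesz[where K = "K * norm y"])
      fix x
      have "cmod (cinner (T x) y) \<le> norm (T x) * norm y" by (rule cinner_cs)
      also have "\<dots> \<le> norm x * K * norm y" using K[of x] by (simp add: mult_right_mono)
      finally show "cmod (cinner (T x) y) \<le> norm x * (K * norm y)" by (simp add: mult.assoc)
    qed (simp_all add: bcl_add[OF T] bcl_scaleC[OF T] cinner_add_left cinner_scaleC_left)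
  qed
  then obtain S where "\<forall>y x. cinner (T x) y = cinner x (S y)" by metis
  hence "is_adjoint T S" unfolding is_adjoint_def by blast
  hence "is_adjoint T (adjoint T)" unfolding adjoint_def by (rule someI[of "is_adjoint T"])
  thus ?thesis unfolding is_adjoint_def by blast
qed


section \<open>Douglas-type factorisation\<close>

lemma scaleC_bl: "bounded_linear (\<lambda>x::'a::complex_inner. c *\<^sub>C x)"
proof (rule bounded_linear_intro[of _ "cmod c"])
  fix r x show "c *\<^sub>C (r *\<^sub>R (x::'a)) = r *\<^sub>R (c *\<^sub>C x)"
    by (simp add: scaleR_scaleC scaleC_scaleC mult.commute)
qed (simp_all add: scaleC_add_right norm_scaleC mult.commute)

lemma range_closure_subspace:
  fixes A :: "'a::chilbert_space \<Rightarrow> 'a"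
  assumes L: "bounded_clinear A"
  shows "0 \<in> closure (range A)"
    and "\<And>x y. x \<in> closure (range A) \<Longrightarrow> y \<in> closure (range A) \<Longrightarrow> x + y \<in> closure (range A)"
    and "\<And>c x. x \<in> closure (range A) \<Longrightarrow> c *\<^sub>C x \<in> closure (range A)"
proof -
  show "0 \<in> closure (range A)" using bcl_zero[OF L] closure_subset by (metis rangeI subsetD)
next
  fix x y assume x: "x \<in> closure (range A)" and y: "y \<in> closure (range A)"
  have 1: "(\<lambda>b. a + b) ` closure (range A) \<subseteq> closure (range A)" if "a \<in> range A" for a
  proof (rule image_closure_subset)
    show "continuous_on (closure (range A)) ((+) a)" by (intro continuous_intros)
    show "(+) a ` range A \<subseteq> closure (range A)" using that closure_subset[of "range A"]
      by (auto simp: bcl_add[OF L, symmetric])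
  qed simp
  have "(\<lambda>a. a + y) ` closure (range A) \<subseteq> closure (range A)"
  proof (rule image_closure_subset)
    show "continuous_on (closure (range A)) (\<lambda>a. a + y)" by (intro continuous_intros)
    show "(\<lambda>a. a + y) ` range A \<subseteq> closure (range A)" using 1 y by blast
  qed simp
  thus "x + y \<in> closure (range A)" using x by blast
next
  fix c x assume x: "x \<in> closure (range A)"
  have "(\<lambda>a. c *\<^sub>C a) ` closure (range A) \<subseteq> closure (range A)"
  proof (rule image_closure_subset)
    show "continuous_on (closure (range A)) (\<lambda>a. c *\<^sub>C a)" by (rule linear_continuous_on[OF scaleC_bl])
    show "(\<lambda>a. c *\<^sub>C a) ` range A \<subseteq> closure (range A)" using closure_subset[of "range A"]
      by (auto simp: bcl_scaleC[OF L, symmetric])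
  qed simp
  thus "c *\<^sub>C x \<in> closure (range A)" using x by blast
qed

lemma douglas:
  fixes A T :: "'a::chilbert_space \<Rightarrow> 'a"
  assumes A: "positive_op A" and T: "T \<in> BA A"
  shows "\<exists>K C. K \<ge> 0 \<and> (\<forall>y. A (C y) = adjoint T (A y)) \<and> (\<forall>y. norm (C y) \<le> K * norm y)"
proof -
  have TL: "bounded_clinear T" using T by (simp add: BA_def)
  have AL: "bounded_clinear A" using A by (rule pos_bcl)
  have ex_w: "\<exists>w. A w = adjoint T (A y)" for y
  proof -
    have "(adjoint T \<circ> A) y \<in> range (adjoint T \<circ> A)" by (rule rangeI)
    hence "adjoint T (A y) \<in> range A" using T unfolding BA_def by auto
    thus ?thesis by (metis rangeE)
  qed
  have ident: "cinner (A (T v)) y = cinner (A v) w" if "A w = adjoint T (A y)" for v y w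
  proof -
    have "cinner (A (T v)) y = cinner (T v) (A y)" by (rule pos_herm[OF A])
    also have "\<dots> = cinner v (adjoint T (A y))" by (rule adjoint_works[OF TL])
    also have "\<dots> = cinner (A v) w" using that pos_herm[OF A, of v w] by simp
    finally show ?thesis .
  qed
  define F where "F n = {y. \<forall>v. cmod (cinner (A (T v)) y) \<le> real n * norm (A v)}" for n
  have clF: "closed (F n)" for n
    unfolding F_def
  proof (intro closed_Collect_all closed_Collect_le)
    fix v show "continuous_on UNIV (\<lambda>y. cmod (cinner (A (T v)) y))"
      by (intro continuous_on_norm linear_continuous_on cinner_right_bl)
  qed (rule continuous_on_const)
  have cover: "\<exists>n. y \<in> F n" for y
  proof -
    obtain w where w: "A w = adjoint T (A y)" using ex_w by blast
    obtain n where n: "norm w \<le> real n" using real_arch_simple by blast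
    have "cmod (cinner (A (T v)) y) \<le> real n * norm (A v)" for v
    proof -
      have "cmod (cinner (A (T v)) y) = cmod (cinner (A v) w)" using ident[OF w] by simp
      also have "\<dots> \<le> norm (A v) * norm w" by (rule cinner_cs)
      also have "\<dots> \<le> norm (A v) * real n" using n by (simp add: mult_left_mono)
      finally show ?thesis by (simp add: mult.commute)
    qed
    thus ?thesis unfolding F_def by blast
  qed
  have "\<exists>n. interior (F n) \<noteq> {}"
  proof (rule ccontr)
    assume "\<not> ?thesis"
    hence "\<forall>n. interior (F n) = {}" by blast
    hence "euclidean interior_of \<Union>(range F) = {}"
      using clF by (intro Baire_category_alt) (auto simp: completely_metrizable_space_euclidean)
    moreover have "\<Union>(range F) = UNIV" using cover by blast
    ultimately show False by simp
  qed
  then obtain n y0 where "y0 \<in> interior (F n)" by blast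
  then obtain r where r: "r > 0" and ball: "ball y0 r \<subseteq> F n" using mem_interior by blast
  have b1: "cmod (cinner (A (T v)) u) \<le> 2 * real n * norm (A v)" if "norm u < r" for u v
  proof -
    have "y0 + u \<in> F n" "y0 \<in> F n" using ball that r by (auto simp: dist_norm)
    hence h: "cmod (cinner (A (T v)) (y0 + u)) \<le> real n * norm (A v)"
              "cmod (cinner (A (T v)) y0) \<le> real n * norm (A v)" unfolding F_def by blast+
    have "cinner (A (T v)) u = cinner (A (T v)) (y0 + u) - cinner (A (T v)) y0"
      by (simp add: cinner_add_right)
    hence "cmod (cinner (A (T v)) u) \<le> cmod (cinner (A (T v)) (y0 + u)) + cmod (cinner (A (T v)) y0)"
      by (metis norm_triangle_ineq4)
    thus ?thesis using h by simp
  qed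
  define K where "K = 4 * real n / r"
  have K0: "K \<ge> 0" using r by (simp add: K_def)
  have b2: "cmod (cinner (A (T v)) u) \<le> K * norm u * norm (A v)" for u v
  proof (cases "u = 0")
    case True thus ?thesis by simp
  next
    case False
    hence nu: "norm u > 0" by simp
    define u' where "u' = (r / (2 * norm u)) *\<^sub>R u"
    have "norm u' = r / 2" using nu r by (simp add: u'_def)
    hence "norm u' < r" using r by simp
    have e: "cinner (A (T v)) u' = complex_of_real (r / (2 * norm u)) * cinner (A (T v)) u"
      unfolding u'_def by (rule cinner_scaleR_right)
    have "cmod (cinner (A (T v)) u') = (r / (2 * norm u)) * cmod (cinner (A (T v)) u)"
      unfolding e norm_mult norm_of_real using nu r by simp
    hence "(r / (2 * norm u)) * cmod (cinner (A (T v)) u) \<le> 2 * real n * norm (A v)"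
      using b1[OF \<open>norm u' < r\<close>, of v] by simp
    hence "cmod (cinner (A (T v)) u) \<le> (2 * real n * norm (A v)) * (2 * norm u) / r"
      using nu r by (simp add: field_simps)
    thus ?thesis by (simp add: K_def field_simps)
  qed
  have b3: "cmod (cinner (adjoint T (A y)) v) \<le> K * norm y * norm (A v)" for y v
  proof -
    have "cinner (adjoint T (A y)) v = cnj (cinner (T v) (A y))"
      by (simp add: cinner_commute[of "adjoint T (A y)"] adjoint_works[OF TL])
    also have "\<dots> = cnj (cinner (A (T v)) y)" by (simp add: pos_herm[OF A])
    finally show ?thesis using b2[of v y] by simp
  qed
  note sub = range_closure_subspace[OF AL]
  have "\<exists>p. A p = adjoint T (A y) \<and> norm p \<le> K * norm y" for y
  proof -
    obtain w where w: "A w = adjoint T (A y)" using ex_w by blast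
    obtain p where pM: "p \<in> closure (range A)" and orth: "\<And>m. m \<in> closure (range A) \<Longrightarrow> cinner (w - p) m = 0"
      using proj_exists[of "closure (range A)" w] sub by auto
    have "cinner (A (w - p)) v = 0" for v
      using orth[of "A v"] closure_subset[of "range A"] pos_herm[OF A, of "w - p" v] by auto
    hence "A (w - p) = 0" using cinner_self_eq_zero by blast
    hence Ap: "A p = adjoint T (A y)" using w by (simp add: bcl_diff[OF AL])
    define G where "G = {m. cmod (cinner p m) \<le> K * norm y * norm m}"
    have clG: "closed G" unfolding G_def
      by (intro closed_Collect_le continuous_on_norm linear_continuous_on cinner_right_bl
          continuous_on_mult_left continuous_on_id)
    have "range A \<subseteq> G"
    proof
      fix m assume "m \<in> range A"
      then obtain v where m: "m = A v" by blast
      have "cinner p (A v) = cinner (adjoint T (A y)) v" using pos_herm[OF A, of p v] Ap by simp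
      thus "m \<in> G" using b3[of y v] m by (simp add: G_def)
    qed
    hence "closure (range A) \<subseteq> G" using clG by (rule closure_minimal)
    hence "cmod (cinner p p) \<le> K * norm y * norm p" using pM by (auto simp: G_def)
    hence "(norm p)^2 \<le> K * norm y * norm p" by (simp add: cinner_self_real norm_power)
    hence "norm p \<le> K * norm y" using K0 by (cases "p = 0") (auto simp: power2_eq_square)
    thus ?thesis using Ap by blast
  qed
  then obtain C where "\<And>y. A (C y) = adjoint T (A y) \<and> norm (C y) \<le> K * norm y" by metis
  thus ?thesis using K0 by blast
qed


section \<open>A-boundedness of operators in BA (Lax's argument)\<close>

lemma A_bounded:
  fixes A T :: "'a::chilbert_space \<Rightarrow> 'a"
  assumes A: "positive_op A" and T: "T \<in> BA A"
  shows "\<exists>M\<ge>0. \<forall>x y. cmod (cinner (A (T x)) y) \<le> M * A_norm A x * A_norm A y"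
proof -
  have TL: "bounded_clinear T" using T by (simp add: BA_def)
  have AL: "bounded_clinear A" using A by (rule pos_bcl)
  obtain K C where K0: "K \<ge> 0" and AC: "\<And>y. A (C y) = adjoint T (A y)"
    and Cb: "\<And>y. norm (C y) \<le> K * norm y" using douglas[OF A T] by blast
  obtain KT where KT: "KT > 0" "\<And>x. norm (T x) \<le> norm x * KT" using bcl_bound[OF TL] by blast
  obtain KA where KA: "KA > 0" "\<And>x. norm (A x) \<le> norm x * KA" using bcl_bound[OF AL] by blast
  define na where "na x = sqrt (Re (cinner (A x) x))" for x
  have na0: "na x \<ge> 0" for x using pos_Re[OF A, of x] by (simp add: na_def)
  have na2: "(na x)^2 = Re (cinner (A x) x)" for x using pos_Re[OF A, of x] by (simp add: na_def)
  have nacs: "cmod (cinner (A x) y) \<le> na x * na y" for x y unfolding na_def by (rule A_cs[OF A])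
  define S where "S x = C (T x)" for x
  define L where "L = K * KT + 1"
  have L0: "L > 0" using K0 KT by (simp add: L_def add_nonneg_pos)
  have Sb: "norm (S x) \<le> L * norm x" for x
  proof -
    have "norm (S x) \<le> K * norm (T x)" by (simp add: S_def Cb)
    also have "\<dots> \<le> K * (norm x * KT)" using K0 KT by (simp add: mult_left_mono)
    also have "\<dots> \<le> L * norm x" by (simp add: L_def algebra_simps)
    finally show ?thesis .
  qed
  have sym: "cinner (A (S u)) v = cinner (A u) (S v)" for u v
  proof -
    have "cinner (A (S u)) v = cnj (cinner v (adjoint T (A (T u))))"
      by (simp add: S_def AC cinner_commute[of "adjoint T (A (T u))"])
    also have "\<dots> = cnj (cinner (T v) (A (T u)))" by (simp add: adjoint_works[OF TL])
    also have "\<dots> = cinner (A (T u)) (T v)" by (simp add: cinner_commute[of "A (T u)"])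
    also have "\<dots> = cinner (T u) (A (T v))" by (rule pos_herm[OF A])
    also have "\<dots> = cinner u (adjoint T (A (T v)))" by (rule adjoint_works[OF TL])
    also have "\<dots> = cinner (A u) (S v)" by (simp add: S_def AC pos_herm[OF A])
    finally show ?thesis .
  qed
  have symN: "cinner (A ((S^^m) u)) v = cinner (A u) ((S^^m) v)" for m u v
  proof (induction m arbitrary: u v)
    case 0 thus ?case by simp
  next
    case (Suc m)
    have "cinner (A ((S^^Suc m) u)) v = cinner (A ((S^^m) u)) (S v)" by (simp add: sym)
    also have "\<dots> = cinner (A u) ((S^^m) (S v))" by (rule Suc.IH)
    also have "\<dots> = cinner (A u) ((S^^Suc m) v)" by (simp add: funpow_Suc_right del: funpow.simps)
    finally show ?case .
  qed
  have normN: "norm ((S^^m) x) \<le> L^m * norm x" for m x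
  proof (induction m)
    case 0 thus ?case by simp
  next
    case (Suc m)
    have "norm ((S^^Suc m) x) \<le> L * norm ((S^^m) x)" using Sb by simp
    also have "\<dots> \<le> L * (L^m * norm x)" using Suc.IH L0 by (simp add: mult_left_mono)
    finally show ?case by (simp add: mult.assoc)
  qed
  have nab: "na u \<le> sqrt KA * norm u" for u
  proof -
    have "Re (cinner (A u) u) \<le> cmod (cinner (A u) u)" by (rule complex_Re_le_cmod)
    also have "\<dots> \<le> norm (A u) * norm u" by (rule cinner_cs)
    also have "\<dots> \<le> norm u * KA * norm u" using KA by (simp add: mult_right_mono)
    finally have "Re (cinner (A u) u) \<le> KA * (norm u)^2" by (simp add: power2_eq_square algebra_simps)
    hence "na u \<le> sqrt (KA * (norm u)^2)" by (simp add: na_def)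
    thus ?thesis by (simp add: real_sqrt_mult)
  qed
  have step: "(na ((S^^m) x))^2 \<le> na x * na ((S^^(2*m)) x)" for m x
  proof -
    have "cinner (A ((S^^m) x)) ((S^^m) x) = cinner (A x) ((S^^m) ((S^^m) x))" by (rule symN)
    also have "(S^^m) ((S^^m) x) = (S^^(2*m)) x" by (simp only: mult_2 funpow_add comp_apply)
    finally have "(na ((S^^m) x))^2 = Re (cinner (A x) ((S^^(2*m)) x))" by (simp add: na2)
    also have "\<dots> \<le> cmod (cinner (A x) ((S^^(2*m)) x))" by (rule complex_Re_le_cmod)
    also have "\<dots> \<le> na x * na ((S^^(2*m)) x)" by (rule nacs)
    finally show ?thesis .
  qed
  have SL: "na (S x) \<le> L * na x" for x
  proof (cases "na x = 0")
    case True
    have "(na (S x))^2 \<le> 0" using step[of 1 x] True by simp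
    hence "na (S x) = 0" using na0[of "S x"] by simp
    thus ?thesis using True by simp
  next
    case False
    hence b: "na x > 0" using na0[of x] by simp
    define a where "a = na (S x)"
    have a0: "a \<ge> 0" by (simp add: a_def na0)
    have P: "a^(2^n) * na x \<le> na ((S^^(2^n)) x) * (na x)^(2^n)" for n
    proof (induction n)
      case 0 thus ?case by (simp add: a_def mult.commute)
    next
      case (Suc n)
      define N where "N = (2::nat)^n"
      have IH: "a^N * na x \<le> na ((S^^N) x) * (na x)^N" using Suc.IH by (simp add: N_def)
      have "(a^N * na x)^2 \<le> (na ((S^^N) x) * (na x)^N)^2"
        using IH a0 b by (intro power_mono) auto
      also have "\<dots> = (na ((S^^N) x))^2 * (na x)^(2*N)" by (simp add: power_mult_distrib power_mult[symmetric] mult.commute)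
      also have "\<dots> \<le> (na x * na ((S^^(2*N)) x)) * (na x)^(2*N)"
        using step[of N x] b by (intro mult_right_mono) auto
      finally have f: "(a^N * na x)^2 \<le> (na x * na ((S^^(2*N)) x)) * (na x)^(2*N)" .
      have e1: "(a^N * na x)^2 = (a^(2*N) * na x) * na x"
      proof -
        have h: "a^(2*N) = a^N * a^N" by (simp only: mult_2 power_add)
        show ?thesis unfolding h by (simp add: power2_eq_square algebra_simps)
      qed
      have e2: "(na x * na ((S^^(2*N)) x)) * (na x)^(2*N) = (na ((S^^(2*N)) x) * (na x)^(2*N)) * na x"
        by (simp add: algebra_simps)
      from f have "(a^(2*N) * na x) * na x \<le> (na ((S^^(2*N)) x) * (na x)^(2*N)) * na x"
        unfolding e1 e2 .
      hence "a^(2*N) * na x \<le> na ((S^^(2*N)) x) * (na x)^(2*N)" using b by simp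
      thus ?case by (simp add: N_def)
    qed
    show ?thesis
    proof (rule ccontr)
      assume "\<not> ?thesis"
      hence gt: "a > L * na x" by (simp add: a_def)
      define \<rho> where "\<rho> = a / (L * na x)"
      have \<rho>1: "\<rho> > 1" using gt L0 b by (simp add: \<rho>_def)
      define c where "c = sqrt KA * norm x / na x"
      obtain n where n: "c < \<rho>^n" using real_arch_pow[OF \<rho>1] by blast
      define N where "N = (2::nat)^n"
      have "n \<le> N" unfolding N_def using less_exp[of n] by simp
      hence "\<rho>^n \<le> \<rho>^N" using \<rho>1 by (intro power_increasing) auto
      have aN: "a^N = \<rho>^N * (L * na x)^N" using L0 b by (simp add: \<rho>_def power_divide)
      have "a^N * na x \<le> na ((S^^N) x) * (na x)^N" using P[of n] by (simp add: N_def)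
      also have "\<dots> \<le> (sqrt KA * (L^N * norm x)) * (na x)^N"
      proof (intro mult_right_mono)
        have "na ((S^^N) x) \<le> sqrt KA * norm ((S^^N) x)" by (rule nab)
        also have "\<dots> \<le> sqrt KA * (L^N * norm x)" using normN KA by (simp add: mult_left_mono)
        finally show "na ((S^^N) x) \<le> sqrt KA * (L^N * norm x)" .
      qed (use b in simp)
      finally have "\<rho>^N * (L^N * (na x)^N) * na x \<le> (sqrt KA * norm x) * (L^N * (na x)^N)"
        unfolding aN by (simp add: power_mult_distrib algebra_simps)
      hence "\<rho>^N * na x \<le> sqrt KA * norm x"
        using L0 b by (simp add: mult.commute mult.left_commute)
      hence "\<rho>^N \<le> c" using b by (simp add: c_def field_simps)
      thus False using n \<open>\<rho>^n \<le> \<rho>^N\<close> by simp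
    qed
  qed
  have TA: "na (T x) \<le> sqrt L * na x" for x
  proof -
    have "cinner (A (T x)) (T x) = cinner (T x) (A (T x))" by (rule pos_herm[OF A])
    also have "\<dots> = cinner x (A (S x))" by (simp add: adjoint_works[OF TL] S_def AC)
    also have "\<dots> = cinner (A x) (S x)" by (simp add: pos_herm[OF A])
    finally have "(na (T x))^2 = Re (cinner (A x) (S x))" by (simp add: na2)
    also have "\<dots> \<le> cmod (cinner (A x) (S x))" by (rule complex_Re_le_cmod)
    also have "\<dots> \<le> na x * na (S x)" by (rule nacs)
    also have "\<dots> \<le> na x * (L * na x)" using SL na0 by (simp add: mult_left_mono)
    finally have "(na (T x))^2 \<le> L * (na x)^2" by (simp add: power2_eq_square algebra_simps)
    hence "sqrt ((na (T x))^2) \<le> sqrt (L * (na x)^2)" by (rule real_sqrt_le_mono)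
    thus ?thesis using na0 by (simp add: real_sqrt_mult)
  qed
  have "cmod (cinner (A (T x)) y) \<le> sqrt L * na x * na y" for x y
  proof -
    have "cmod (cinner (A (T x)) y) \<le> na (T x) * na y" by (rule nacs)
    also have "\<dots> \<le> sqrt L * na x * na y" using TA na0 by (simp add: mult_right_mono)
    finally show ?thesis .
  qed
  moreover have "na = A_norm A" by (simp add: fun_eq_iff na_def A_norm_def A_inner_def)
  ultimately show ?thesis using L0 by (intro exI[of _ "sqrt L"]) auto
qed


lemma block_calc:
  fixes A P Q R S :: "'a::complex_inner \<Rightarrow> 'a"
  assumes "bounded_clinear A" "bounded_clinear P" "bounded_clinear Q" "bounded_clinear R" "bounded_clinear S"
  shows "AA_inner A (block_op P Q R S (a *\<^sub>C x, b *\<^sub>C x)) (a *\<^sub>C x, b *\<^sub>C x)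
    = (a * cnj a) * cinner (A (P x)) x + (b * cnj a) * cinner (A (Q x)) x
      + (a * cnj b) * cinner (A (R x)) x + (b * cnj b) * cinner (A (S x)) x"
  using assms
  by (simp add: AA_inner_def A_inner_def block_op_def bcl_add bcl_scaleC cinner_add_left
      cinner_scaleC_left cinner_scaleC_right algebra_simps)

lemma block_eps:
  fixes A P Q R S :: "'a::complex_inner \<Rightarrow> 'a"
  assumes "bounded_clinear A" "bounded_clinear P" "bounded_clinear Q" "bounded_clinear R" "bounded_clinear S"
    and e: "e * cnj e = 1"
  defines "c \<equiv> complex_of_real (sqrt (1/2))"
  shows "AA_inner A (block_op P Q R S (c *\<^sub>C x, (c * e) *\<^sub>C x)) (c *\<^sub>C x, (c * e) *\<^sub>C x)
    = (1/2) * (cinner (A (P x)) x + e * cinner (A (Q x)) x + cnj e * cinner (A (R x)) x + cinner (A (S x)) x)"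
    and "AA_inner A (c *\<^sub>C x, (c * e) *\<^sub>C x) (c *\<^sub>C x, (c * e) *\<^sub>C x) = cinner (A x) x"
proof -
  have cc: "c * cnj c = 1/2" unfolding c_def
    by (simp flip: of_real_mult)
  have 1: "(c * e) * cnj c = e / 2" using cc by (simp add: algebra_simps)
  have 2: "c * cnj (c * e) = cnj e / 2" using cc by (simp add: algebra_simps)
  have 3: "(c * e) * cnj (c * e) = 1/2" using cc e
    by (simp add: algebra_simps)
  show "AA_inner A (block_op P Q R S (c *\<^sub>C x, (c * e) *\<^sub>C x)) (c *\<^sub>C x, (c * e) *\<^sub>C x)
    = (1/2) * (cinner (A (P x)) x + e * cinner (A (Q x)) x + cnj e * cinner (A (R x)) x + cinner (A (S x)) x)"
    unfolding block_calc[OF assms(1-5)] cc 1 2 3 by (simp add: algebra_simps)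
  show "AA_inner A (c *\<^sub>C x, (c * e) *\<^sub>C x) (c *\<^sub>C x, (c * e) *\<^sub>C x) = cinner (A x) x"
  proof -
    have "AA_inner A (c *\<^sub>C x, (c * e) *\<^sub>C x) (c *\<^sub>C x, (c * e) *\<^sub>C x)
        = (c * cnj c) * cinner (A x) x + ((c * e) * cnj (c * e)) * cinner (A x) x"
      using assms(1) by (simp add: AA_inner_def A_inner_def bcl_scaleC cinner_scaleC_left cinner_scaleC_right
          mult.assoc)
    thus ?thesis unfolding cc 3 by simp
  qed
qed

theorem theorem2p22:
  fixes A P Q R S :: "'a::chilbert_space \<Rightarrow> 'a"
  assumes "positive_op A" and "A \<noteq> (\<lambda>x. 0)"
    and "P \<in> BA A" and "Q \<in> BA A" and "R \<in> BA A" and "S \<in> BA A"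
  defines "\<mu> \<equiv> max (omega_A A (\<lambda>x. Q x + R x + S x + P x))
                    (omega_A A (\<lambda>x. Q x + R x - S x - P x))"
    and "\<nu> \<equiv> max (omega_A A (\<lambda>x. Q x - R x + \<i> *\<^sub>C (S x + P x)))
                  (omega_A A (\<lambda>x. Q x - R x - \<i> *\<^sub>C (S x + P x)))"
  shows "omega_AA A (block_op P Q R S) \<ge> (1/2) * max \<mu> \<nu>"
proof -
  note A = assms(1)
  have AL: "bounded_clinear A" using A by (rule pos_bcl)
  have PL: "bounded_clinear P" and QL: "bounded_clinear Q" and RL: "bounded_clinear R" and SL: "bounded_clinear S"
    using assms(3-6) by (simp_all add: BA_def)
  note lin = AL PL QL RL SL
  define na where "na x = A_norm A x" for x
  have na0: "na x \<ge> 0" for x using pos_Re[OF A, of x] by (simp add: na_def A_norm_def A_inner_def)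
  have naRe: "(na x)^2 = Re (cinner (A x) x)" for x
    using pos_Re[OF A, of x] by (simp add: na_def A_norm_def A_inner_def)
  obtain MP where MP: "MP \<ge> 0" "\<And>x y. cmod (cinner (A (P x)) y) \<le> MP * na x * na y"
    using A_bounded[OF A assms(3)] na_def by auto
  obtain MQ where MQ: "MQ \<ge> 0" "\<And>x y. cmod (cinner (A (Q x)) y) \<le> MQ * na x * na y"
    using A_bounded[OF A assms(4)] na_def by auto
  obtain MR where MR: "MR \<ge> 0" "\<And>x y. cmod (cinner (A (R x)) y) \<le> MR * na x * na y"
    using A_bounded[OF A assms(5)] na_def by auto
  obtain MS where MS: "MS \<ge> 0" "\<And>x y. cmod (cinner (A (S x)) y) \<le> MS * na x * na y"
    using A_bounded[OF A assms(6)] na_def by auto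
  define B where "B = block_op P Q R S"
  define W where "W = {cmod (AA_inner A (B z) z) | z. AA_norm A z = 1}"
  have bdd: "bdd_above W"
  proof (rule bdd_aboveI[of _ "MP + MQ + MR + MS"])
    fix w assume "w \<in> W"
    then obtain x1 x2 where w: "w = cmod (AA_inner A (B (x1, x2)) (x1, x2))" and n: "AA_norm A (x1, x2) = 1"
      unfolding W_def by auto
    have "Re (cinner (A x1) x1) + Re (cinner (A x2) x2) = 1"
      using n pos_Re[OF A, of x1] pos_Re[OF A, of x2]
      by (simp add: AA_norm_def AA_inner_def A_inner_def)
    hence "(na x1)^2 + (na x2)^2 = 1" by (simp add: naRe)
    hence "(na x1)^2 \<le> 1" "(na x2)^2 \<le> 1"
      using zero_le_power2[of "na x1"] zero_le_power2[of "na x2"] by linarith+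
    hence n1: "na x1 \<le> 1" and n2: "na x2 \<le> 1"
      using power2_le_imp_le[of "na x1" 1] power2_le_imp_le[of "na x2" 1] by simp_all
    have e: "AA_inner A (B (x1, x2)) (x1, x2) = cinner (A (P x1)) x1 + cinner (A (Q x2)) x1
        + cinner (A (R x1)) x2 + cinner (A (S x2)) x2"
      by (simp add: B_def block_op_def AA_inner_def A_inner_def bcl_add[OF AL] cinner_add_left)
    have b: "M * na u * na v \<le> M" if "M \<ge> 0" "na u \<le> 1" "na v \<le> 1" for M u v
    proof -
      have "na u * na v \<le> 1" using that na0[of u] na0[of v] by (intro mult_le_one) auto
      hence "M * (na u * na v) \<le> M * 1" using that(1) by (intro mult_left_mono) auto
      thus ?thesis by (simp add: mult.assoc)
    qed
    have "w \<le> cmod (cinner (A (P x1)) x1) + cmod (cinner (A (Q x2)) x1)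
        + cmod (cinner (A (R x1)) x2) + cmod (cinner (A (S x2)) x2)"
      unfolding w e
    proof -
      fix a b c d :: complex
      have "cmod (a + b + c + d) \<le> cmod (a + b + c) + cmod d" by (rule norm_triangle_ineq)
      also have "cmod (a + b + c) \<le> cmod (a + b) + cmod c" by (rule norm_triangle_ineq)
      also have "cmod (a + b) \<le> cmod a + cmod b" by (rule norm_triangle_ineq)
      finally show "cmod (a + b + c + d) \<le> cmod a + cmod b + cmod c + cmod d" by simp
    qed
    also have "\<dots> \<le> MP + MQ + MR + MS"
      using MP(2)[of x1 x1] MQ(2)[of x2 x1] MR(2)[of x1 x2] MS(2)[of x2 x2]
        b[OF MP(1) n1 n1] b[OF MQ(1) n2 n1] b[OF MR(1) n1 n2] b[OF MS(1) n2 n2] by linarith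
    finally show "w \<le> MP + MQ + MR + MS" .
  qed
  have upper: "cmod (AA_inner A (B z) z) \<le> omega_AA A B" if "AA_norm A z = 1" for z
  proof -
    have mem: "cmod (AA_inner A (B z) z) \<in> W" using that unfolding W_def by blast
    have "omega_AA A B = Sup W" unfolding omega_AA_def W_def by (rule refl)
    thus ?thesis using cSup_upper[OF mem bdd] by simp
  qed
  have "\<exists>x. Re (cinner (A x) x) > 0"
  proof (rule ccontr)
    assume "\<not> ?thesis"
    hence z: "Re (cinner (A x) x) = 0" for x
    proof -
      have "\<not> 0 < Re (cinner (A x) x)" using \<open>\<not> (\<exists>x. Re (cinner (A x) x) > 0)\<close> by blast
      thus ?thesis using pos_Re[OF A, of x] by linarith
    qed
    obtain x0 where x0: "A x0 \<noteq> 0" using assms(2) by auto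
    have "cmod (cinner (A x0) (A x0)) \<le> 0" using A_cs[OF A, of x0 "A x0"] z by simp
    hence "cinner (A x0) (A x0) = 0" by simp
    thus False using x0 cinner_self_eq_zero by blast
  qed
  then obtain x0 where x0: "Re (cinner (A x0) x0) > 0" by blast
  define x1 where "x1 = (1 / sqrt (Re (cinner (A x0) x0))) *\<^sub>R x0"
  have "Re (cinner (A x1) x1) = 1"
    using x0 by (simp add: x1_def bcl_scaleR[OF AL] cinner_scaleR_left cinner_scaleR_right
        power2_eq_square[symmetric])
  hence ne: "\<exists>x. A_norm A x = 1" by (auto simp: A_norm_def A_inner_def)
  have omle: "omega_A A T \<le> 2 * omega_AA A B"
    if h: "\<And>x. A_norm A x = 1 \<Longrightarrow> cmod (cinner (A (T x)) x) \<le> 2 * omega_AA A B" for T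
    unfolding omega_A_def using ne h by (intro cSup_least) (auto simp: A_inner_def)
  define c where "c = complex_of_real (sqrt (1/2))"
  have gen: "cmod (cinner (A (T x)) x) \<le> 2 * omega_AA A B"
    if n: "A_norm A x = 1" and e: "e * cnj e = 1"
      and eq: "cmod (cinner (A (T x)) x) = cmod (cinner (A (P x)) x + e * cinner (A (Q x)) x
                 + cnj e * cinner (A (R x)) x + cinner (A (S x)) x)" for T x e
  proof -
    note be = block_eps[OF lin e, of x]
    have "AA_norm A (c *\<^sub>C x, (c * e) *\<^sub>C x) = 1"
      using n by (simp add: AA_norm_def be(2) A_norm_def A_inner_def c_def)
    from upper[OF this] have "cmod ((1/2) * (cinner (A (P x)) x + e * cinner (A (Q x)) x
        + cnj e * cinner (A (R x)) x + cinner (A (S x)) x)) \<le> omega_AA A B"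
      using be(1) by (simp add: B_def c_def)
    thus ?thesis unfolding eq by (simp add: norm_mult)
  qed
  have m1: "omega_A A (\<lambda>x. Q x + R x + S x + P x) \<le> 2 * omega_AA A B"
  proof (rule omle)
    fix x assume n: "A_norm A x = 1"
    have "cinner (A (Q x + R x + S x + P x)) x = (cinner (A (P x)) x) + 1 * (cinner (A (Q x)) x) + cnj 1 * (cinner (A (R x)) x) + (cinner (A (S x)) x)"
      by (simp add: bcl_add[OF AL] cinner_add_left algebra_simps)
    hence "cmod (cinner (A (Q x + R x + S x + P x)) x) = cmod ((cinner (A (P x)) x) + 1 * (cinner (A (Q x)) x) + cnj 1 * (cinner (A (R x)) x) + (cinner (A (S x)) x))"
      by simp
    thus "cmod (cinner (A (Q x + R x + S x + P x)) x) \<le> 2 * omega_AA A B"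
      by (intro gen[where T="\<lambda>x. Q x + R x + S x + P x" and e=1, OF n]) simp_all
  qed
  have m2: "omega_A A (\<lambda>x. Q x + R x - S x - P x) \<le> 2 * omega_AA A B"
  proof (rule omle)
    fix x assume n: "A_norm A x = 1"
    have "cinner (A (Q x + R x - S x - P x)) x = - ((cinner (A (P x)) x) - (cinner (A (Q x)) x) - (cinner (A (R x)) x) + (cinner (A (S x)) x))"
      by (simp add: bcl_add[OF AL] bcl_diff[OF AL] cinner_add_left cinner_diff_left algebra_simps)
    hence "cmod (cinner (A (Q x + R x - S x - P x)) x) = cmod ((cinner (A (P x)) x) + (-1) * (cinner (A (Q x)) x) + cnj (-1) * (cinner (A (R x)) x) + (cinner (A (S x)) x))"
      by (simp only: norm_minus_cancel) simp
    thus "cmod (cinner (A (Q x + R x - S x - P x)) x) \<le> 2 * omega_AA A B"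
      by (intro gen[where T="\<lambda>x. Q x + R x - S x - P x" and e="-1", OF n]) simp_all
  qed
  have m3: "omega_A A (\<lambda>x. Q x - R x + \<i> *\<^sub>C (S x + P x)) \<le> 2 * omega_AA A B"
  proof (rule omle)
    fix x assume n: "A_norm A x = 1"
    have "cinner (A (Q x - R x + \<i> *\<^sub>C (S x + P x))) x = \<i> * ((cinner (A (P x)) x) + (-\<i>) * (cinner (A (Q x)) x) + cnj (-\<i>) * (cinner (A (R x)) x) + (cinner (A (S x)) x))"
      by (simp add: bcl_add[OF AL] bcl_diff[OF AL] bcl_scaleC[OF AL] cinner_add_left cinner_diff_left
          cinner_scaleC_left algebra_simps)
    hence "cmod (cinner (A (Q x - R x + \<i> *\<^sub>C (S x + P x))) x) = cmod ((cinner (A (P x)) x) + (-\<i>) * (cinner (A (Q x)) x) + cnj (-\<i>) * (cinner (A (R x)) x) + (cinner (A (S x)) x))"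
      by (simp add: norm_mult)
    thus "cmod (cinner (A (Q x - R x + \<i> *\<^sub>C (S x + P x))) x) \<le> 2 * omega_AA A B"
      by (intro gen[where T="\<lambda>x. Q x - R x + \<i> *\<^sub>C (S x + P x)" and e="-\<i>", OF n]) simp_all
  qed
  have m4: "omega_A A (\<lambda>x. Q x - R x - \<i> *\<^sub>C (S x + P x)) \<le> 2 * omega_AA A B"
  proof (rule omle)
    fix x assume n: "A_norm A x = 1"
    have "cinner (A (Q x - R x - \<i> *\<^sub>C (S x + P x))) x = (-\<i>) * ((cinner (A (P x)) x) + \<i> * (cinner (A (Q x)) x) + cnj \<i> * (cinner (A (R x)) x) + (cinner (A (S x)) x))"
      by (simp add: bcl_add[OF AL] bcl_diff[OF AL] bcl_scaleC[OF AL] cinner_add_left cinner_diff_left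
          cinner_scaleC_left algebra_simps)
    hence "cmod (cinner (A (Q x - R x - \<i> *\<^sub>C (S x + P x))) x) = cmod ((cinner (A (P x)) x) + \<i> * (cinner (A (Q x)) x) + cnj \<i> * (cinner (A (R x)) x) + (cinner (A (S x)) x))"
      by (simp add: norm_mult)
    thus "cmod (cinner (A (Q x - R x - \<i> *\<^sub>C (S x + P x))) x) \<le> 2 * omega_AA A B"
      by (intro gen[where T="\<lambda>x. Q x - R x - \<i> *\<^sub>C (S x + P x)" and e="\<i>", OF n]) simp_all
  qed
  show ?thesis using m1 m2 m3 m4 unfolding \<mu>_def \<nu>_def B_def by simp
qed

end
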